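(* Let $(x_k)_{k\ge0}$ be indeterminates, define $a_n=x_n$ if $n=2^k-1$ for some integer $k\ge0$ and $a_n=0$ otherwise, and let $d(n)=\det\left(a_{i+j}\right)_{i,j=0}^{n-1}$ and $D(n)=\det\left(a_{i+j+1}\right)_{i,j=0}^{n-1}$, with $d(0)=D(0)=1$. Then for all $n\ge0$, $$\frac{d(n)\,d(n+1)}{D(n)^2}=(-1)^n x_0.$$ *)

theory Defs
  imports "HOL-Library.Poly_Mapping" "HOL-Computational_Algebra.Fraction_Field"
    "Jordan_Normal_Form.Determinant"
begin

text \<open>Integer polynomials in the countably many indeterminates x_0, x_1, ...:
  monomials are finitely supported exponent vectors (poly_mapping nat nat).\<close>
type_synonym ipoly = "(nat \<Rightarrow>\<^sub>0 nat) \<Rightarrow>\<^sub>0 int"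

definition var :: "nat \<Rightarrow> ipoly" where
  "var k = Poly_Mapping.single (Poly_Mapping.single k 1) 1"

definition aseq :: "nat \<Rightarrow> ipoly" where
  "aseq n = (if \<exists>k::nat. n = 2 ^ k - 1 then var n else 0)"

definition hd_det :: "nat \<Rightarrow> ipoly" where
  "hd_det n = det (mat n n (\<lambda>(i, j). aseq (i + j)))"

definition hD_det :: "nat \<Rightarrow> ipoly" where
  "hD_det n = det (mat n n (\<lambda>(i, j). aseq (i + j + 1)))"

end

theory Submission
  imports Defs
begin

lemma det_single_row:
  fixes A :: "'a::comm_ring_1 mat"
  assumes A: "A \<in> carrier_mat n n" and i: "i < n" and j0: "j0 < n"
    and z: "\<And>j. j < n \<Longrightarrow> j \<noteq> j0 \<Longrightarrow> A $$ (i,j) = 0"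
  shows "det A = A $$ (i,j0) * ((-1)^(i+j0) * det (mat_delete A i j0))"
proof -
  have "det A = (\<Sum>j<n. A $$ (i,j) * cofactor A i j)" by (rule laplace_expansion_row[OF A i])
  also have "\<dots> = A $$ (i,j0) * cofactor A i j0"
    using z j0 by (simp add: sum.remove[of _ j0] sum.neutral)
  finally show ?thesis by (simp add: cofactor_def)
qed

lemma det_single_col:
  fixes A :: "'a::comm_ring_1 mat"
  assumes A: "A \<in> carrier_mat n n" and j: "j < n" and i0: "i0 < n"
    and z: "\<And>i. i < n \<Longrightarrow> i \<noteq> i0 \<Longrightarrow> A $$ (i,j) = 0"
  shows "det A = A $$ (i0,j) * ((-1)^(i0+j) * det (mat_delete A i0 j))"
proof -
  have "det A = (\<Sum>i<n. A $$ (i,j) * cofactor A i j)" by (rule laplace_expansion_column[OF A j])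
  also have "\<dots> = A $$ (i0,j) * cofactor A i0 j"
    using z i0 by (simp add: sum.remove[of _ i0] sum.neutral)
  finally show ?thesis by (simp add: cofactor_def)
qed


lemma peel:
  fixes f :: "nat \<Rightarrow> nat \<Rightarrow> 'a::comm_ring_1"
  assumes "\<And>i j. i < r+m \<Longrightarrow> j < r+m \<Longrightarrow> ((2*r+m) div 2 \<le> i \<or> (2*r+m) div 2 \<le> j)
     \<Longrightarrow> f i j = (if i+j = 2*r+m-1 then c else 0)"
  shows "det (mat (r+m) (r+m) (\<lambda>(i,j). f i j)) = (-1)^(m div 2) * c^m * det (mat r r (\<lambda>(i,j). f i j))"
  using assms
proof (induction m arbitrary: f rule: less_induct)
  case (less m)
  show ?case
  proof (cases "m < 2")
    case True
    then consider "m = 0" | "m = 1" by linarith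
    then show ?thesis
    proof cases
      case 1 then show ?thesis by simp
    next
      case 2
      let ?A = "mat (r+1) (r+1) (\<lambda>(i,j). f i j)"
      have "det ?A = ?A $$ (r,r) * ((-1)^(r+r) * det (mat_delete ?A r r))"
        by (rule det_single_row[of _ "r+1"]) (use less.prems 2 in auto)
      also have "mat_delete ?A r r = mat r r (\<lambda>(i,j). f i j)"
        unfolding mat_delete_def by (rule eq_matI) auto
      also have "?A $$ (r,r) = c" using less.prems[of r r] 2 by auto
      finally show ?thesis using 2 by (simp add: power_add[symmetric] mult_2[symmetric] power_mult)
    qed
  next
    case False
    then obtain m' where m': "m = m' + 2" by (metis add.commute le_Suc_ex not_less numeral_2_eq_2 Suc_1)
    define n where "n = r + m"
    let ?A = "mat n n (\<lambda>(i,j). f i j)"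
    have h: "(2*r+m) div 2 = r + m' div 2 + 1" using m' by simp
    have row: "det ?A = ?A $$ (n-1,r) * ((-1)^(n-1+r) * det (mat_delete ?A (n-1) r))"
      by (rule det_single_row[of _ n]) (use less.prems m' h in \<open>auto simp: n_def\<close>)
    have c1: "?A $$ (n-1,r) = c" using less.prems[of "n-1" r] m' h by (auto simp: n_def)
    define B where "B = mat_delete ?A (n-1) r"
    have Bc: "B \<in> carrier_mat (n-1) (n-1)" unfolding B_def by (rule mat_delete_carrier) auto
    have Bij: "B $$ (i,j) = f i (if j < r then j else Suc j)" if "i < n-1" "j < n-1" for i j
      using that unfolding B_def mat_delete_def by auto
    have col: "det B = B $$ (r, n-2) * ((-1)^(r+(n-2)) * det (mat_delete B r (n-2)))"
      by (rule det_single_col[OF Bc]) (use less.prems m' h in \<open>auto simp: n_def Bij\<close>)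
    have c2: "B $$ (r, n-2) = c" using less.prems[of r "n-1"] m' h by (auto simp: n_def Bij)
    define g where "g i j = f (if i < r then i else Suc i) (if j < r then j else Suc j)" for i j
    have C: "mat_delete B r (n-2) = mat (r+m') (r+m') (\<lambda>(i,j). g i j)"
      unfolding mat_delete_def using Bc m' by (intro eq_matI) (auto simp: Bij g_def n_def)
    have IH: "det (mat (r+m') (r+m') (\<lambda>(i,j). g i j)) = (-1)^(m' div 2) * c^m' * det (mat r r (\<lambda>(i,j). g i j))"
    proof (rule less.IH)
      show "m' < m" using m' by simp
      fix i j assume i: "i < r+m'" and j: "j < r+m'" and ij: "(2*r+m') div 2 \<le> i \<or> (2*r+m') div 2 \<le> j"
      show "g i j = (if i+j = 2*r+m'-1 then c else 0)"
        using less.prems[of "if i < r then i else Suc i" "if j < r then j else Suc j"] i j ij m' h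
        unfolding g_def by (auto split: if_splits)
    qed
    have gf: "mat r r (\<lambda>(i,j). g i j) = mat r r (\<lambda>(i,j). f i j)"
      by (rule eq_matI) (auto simp: g_def)
    have sgn: "(-1)^(n-1+r) * (-1)^(r+(n-2)) = (-1::'a)"
    proof -
      have "n-1+r = Suc (r+(n-2))" using m' by (simp add: n_def)
      then show ?thesis by (simp add: power_add[symmetric] mult_2[symmetric] power_mult)
    qed
    have "det ?A = c * c * ((-1)^(n-1+r) * (-1)^(r+(n-2))) * det (mat (r+m') (r+m') (\<lambda>(i,j). g i j))"
      using row col c1 c2 C unfolding B_def by (simp add: algebra_simps)
    also have "\<dots> = (-1)^(m div 2) * c^m * det (mat r r (\<lambda>(i,j). f i j))"
      unfolding sgn IH gf using m' by (simp add: algebra_simps power2_eq_square)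
    finally show ?thesis by (simp add: n_def)
  qed
qed


lemma pow_char:
  fixes x p :: nat
  assumes "2^p \<le> x" "x + 2 \<le> 4*2^p"
  shows "(\<exists>t::nat. x = 2^t - 1) \<longleftrightarrow> x = 2*2^p - 1"
proof
  assume "\<exists>t::nat. x = 2^t - 1"
  then obtain t :: nat where t: "x = 2^t - 1" by blast
  have "(0::nat) < 2^t" by simp
  then have "(2::nat)^p < 2^t" using assms(1) t by linarith
  then have 1: "p < t" by (simp add: power_strict_increasing_iff)
  have "(2::nat)^(p+2) = 4*2^p" by simp
  then have "(2::nat)^t < 2^(p+2)" using assms(2) t by linarith
  then have "t < p+2" using power_less_imp_less_exp[of "2::nat" t "p+2"] by simp
  with 1 have "t = p+1" by linarith
  then show "x = 2*2^p - 1" using t by simp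
next
  assume "x = 2*2^p - 1"
  then show "\<exists>t::nat. x = 2^t - 1" by (intro exI[of _ "Suc p"]) simp
qed

lemma arith1:
  fixes K n :: nat assumes "K < n" "n \<le> 2*K"
  shows "n = (2*K-n) + (2*n-2*K)" "(2*(2*K-n)+(2*n-2*K)) div 2 = K"
    "2*(2*K-n)+(2*n-2*K)-1 = 2*K-1" "(2*n-2*K) div 2 = n-K"
proof -
  have x: "2*(2*K-n)+(2*n-2*K) = 2*K" "2*n-2*K = 2*(n-K)" "(2*K-n) + (2*n-2*K) = n" using assms by linarith+
  show "n = (2*K-n) + (2*n-2*K)" using x(3) by simp
  show "(2*(2*K-n)+(2*n-2*K)) div 2 = K" unfolding x(1) by simp
  show "2*(2*K-n)+(2*n-2*K)-1 = 2*K-1" unfolding x(1) ..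
  show "(2*n-2*K) div 2 = n-K" unfolding x(2) by simp
qed

lemma arith2:
  fixes K n :: nat assumes "K \<le> n" "n < 2*K"
  shows "n = (2*K-1-n) + (2*n+1-2*K)" "(2*(2*K-1-n)+(2*n+1-2*K)) div 2 = K-1"
    "2*(2*K-1-n)+(2*n+1-2*K)-1 = 2*K-2" "(2*n+1-2*K) div 2 = n-K" "2*n+1-2*K = 2*(n-K)+1"
proof -
  have x: "2*(2*K-1-n)+(2*n+1-2*K) = 2*(K-1)+1" "2*n+1-2*K = 2*(n-K)+1" "(2*K-1-n) + (2*n+1-2*K) = n"
    "2*(K-1)+1-1 = 2*K-2" using assms by linarith+
  show "n = (2*K-1-n) + (2*n+1-2*K)" using x(3) by simp
  show "(2*(2*K-1-n)+(2*n+1-2*K)) div 2 = K-1" unfolding x(1) by simp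
  show "2*(2*K-1-n)+(2*n+1-2*K)-1 = 2*K-2" unfolding x(1) x(4) ..
  show "(2*n+1-2*K) div 2 = n-K" unfolding x(2) by simp
  show "2*n+1-2*K = 2*(n-K)+1" by (rule x(2))
qed

lemma R1:
  assumes "2^p < n" "n \<le> 2*2^p"
  shows "hd_det n = (-1)^(n-2^p) * var (2*2^p-1)^(2*(n-2^p)) * hd_det (2*2^p-n)"
proof -
  define r where "r = 2*2^p - n"
  define m where "m = 2*n - 2*2^p"
  have nm: "n = r + m" "(2*r+m) div 2 = 2^p" "2*r+m-1 = 2*2^p - 1" "m div 2 = n - 2^p"
    unfolding r_def m_def by (rule arith1[OF assms])+
  have "det (mat (r+m) (r+m) (\<lambda>(i,j). aseq (i+j))) = (-1)^(m div 2) * var (2*2^p-1)^m * det (mat r r (\<lambda>(i,j). aseq (i+j)))"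
  proof -
   have hyp: "aseq (i+j) = (if i+j = 2*r+m-1 then var (2*2^p-1) else 0)"
     if i: "i < r+m" and j: "j < r+m" and ij: "(2*r+m) div 2 \<le> i \<or> (2*r+m) div 2 \<le> j" for i j
   proof -
    have "2^p \<le> i+j" "i+j+2 \<le> 4*2^p" using i j ij assms unfolding nm(2) nm(1)[symmetric] by linarith+
    from pow_char[OF this] show ?thesis
      unfolding aseq_def nm(3) by auto
  qed
  show ?thesis using peel[of r m "\<lambda>i j. aseq (i+j)", OF hyp] by simp
  qed
  note H = this
  have e3: "m = 2*(n-2^p)" unfolding m_def by (simp add: diff_mult_distrib2)
  have e4: "r = 2*2^p-n" by (simp add: r_def)
  from H[unfolded nm(1)[symmetric] nm(4), unfolded e3 e4] show ?thesis unfolding hd_det_def .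
qed

lemma R2:
  assumes "2^p \<le> n" "n < 2*2^p"
  shows "hD_det n = (-1)^(n-2^p) * var (2*2^p-1)^(2*(n-2^p)+1) * hD_det (2*2^p-1-n)"
proof -
  define r where "r = 2*2^p - 1 - n"
  define m where "m = 2*n + 1 - 2*2^p"
  have nm: "n = r + m" "(2*r+m) div 2 = 2^p - 1" "2*r+m-1 = 2*2^p - 2" "m div 2 = n - 2^p" "m = 2*(n-2^p)+1"
    unfolding r_def m_def by (rule arith2[OF assms])+
  have "det (mat (r+m) (r+m) (\<lambda>(i,j). aseq (i+j+1))) = (-1)^(m div 2) * var (2*2^p-1)^m * det (mat r r (\<lambda>(i,j). aseq (i+j+1)))"
  proof -
   have hyp: "aseq (i+j+1) = (if i+j = 2*r+m-1 then var (2*2^p-1) else 0)"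
     if i: "i < r+m" and j: "j < r+m" and ij: "(2*r+m) div 2 \<le> i \<or> (2*r+m) div 2 \<le> j" for i j
   proof -
    have p1: "(1::nat) \<le> 2^p" by simp
    have "2^p \<le> i+j+1" "i+j+1+2 \<le> 4*2^p" using i j ij assms p1 unfolding nm(2) nm(1)[symmetric] by linarith+
    from pow_char[OF this] have "(\<exists>t::nat. i+j+1 = 2^t - 1) \<longleftrightarrow> i+j+1 = 2*2^p - 1" .
    moreover have "i+j+1 = 2*2^p-1 \<longleftrightarrow> i+j = 2*2^p-2" using p1 by linarith
    ultimately show ?thesis
      unfolding aseq_def nm(3) by presburger
  qed
  show ?thesis using peel[of r m "\<lambda>i j. aseq (i+j+1)", OF hyp] by simp
  qed
  note H = this
  have e4: "r = 2*2^p-1-n" by (simp add: r_def)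
  from H[unfolded nm(1)[symmetric] nm(4), unfolded nm(5) e4] show ?thesis unfolding hD_det_def .
qed


lemma var_nz: "var k \<noteq> 0"
  unfolding var_def by (metis lookup_single_eq lookup_zero zero_neq_one)

lemma hd0: "hd_det 0 = 1" and hD0: "hD_det 0 = 1"
  unfolding hd_det_def hD_det_def by (rule det_dim_zero, simp)+

lemma hd1: "hd_det 1 = var 0"
proof -
  let ?A = "mat 1 1 (\<lambda>(i,j). aseq (i+j))"
  have "det ?A = ?A $$ (0,0) * ((-1)^(0+0) * det (mat_delete ?A 0 0))"
    by (rule det_single_row[of _ 1]) auto
  moreover have "det (mat_delete ?A 0 0) = 1" by (rule det_dim_zero) (simp add: mat_delete_def)
  moreover have "aseq 0 = var 0" unfolding aseq_def by (metis diff_self_eq_0 power_0)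
  ultimately show ?thesis unfolding hd_det_def by simp
qed

lemma sign_flip:
  fixes n q K :: nat
  assumes "n + q = 2*K - 1" "K \<ge> 1"
  shows "((-1)^n :: ipoly) = - ((-1)^q)"
proof -
  have t: "n + q = Suc (2*(K-1))" using assms by simp
  have "((-1)^n :: ipoly) * (-1)^q = -1" by (simp add: power_add[symmetric] t power_mult)
  then have "((-1)^n :: ipoly) * (-1)^q * (-1)^q = - ((-1)^q)" by simp
  moreover have "((-1)^q :: ipoly) * (-1)^q = 1" by (simp add: power_add[symmetric] mult_2[symmetric] power_mult)
  ultimately show ?thesis by (simp add: mult.assoc)
qed

lemma ex_K: fixes n :: nat assumes "1 \<le> n" obtains p where "2^p \<le> n" "n < 2*2^p"
  using ex_power_ivl1[of 2 n] assms by auto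

lemma hD_nz: "hD_det n \<noteq> 0"
proof (induction n rule: less_induct)
  case (less n)
  show ?case
  proof (cases "n = 0")
    case True then show ?thesis by (simp add: hD0)
  next
    case False
    then obtain p where p: "2^p \<le> n" "n < 2*2^p" using ex_K[of n] by auto
    have "2*2^p-1-n < n" using p by simp
    then have "hD_det (2*2^p-1-n) \<noteq> 0" by (rule less.IH)
    then show ?thesis using R2[OF p] var_nz by simp
  qed
qed

lemma hx1: fixes x y z :: "'a::comm_ring_1" shows "(x*y*z)^2 = (x*x)*(y*y)*z^2"
  by (simp add: power2_eq_square ac_simps)

lemma hx2: fixes y s v z :: "'a::comm_ring_1" shows "- (y * (s * v * z)) = - s * v * (1 * y * z)"
  by (simp add: ac_simps)

lemma main_id: "hd_det n * hd_det (n+1) = (-1)^n * var 0 * (hD_det n)^2"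
proof (induction n rule: less_induct)
  case (less n)
  show ?case
  proof (cases "n = 0")
    case True then show ?thesis using hd1 by (simp add: hd0 hD0)
  next
    case False
    then obtain p where p: "2^p \<le> n" "n < 2*2^p" using ex_K[of n] by auto
    define K :: nat where "K = 2^p"
    define c where "c = var (2*K-1)"
    have K1: "K \<ge> 1" by (simp add: K_def)
    show ?thesis
    proof (cases "n = K")
      case True
      have a: "hd_det (n+1) = - (c^2 * hd_det (K-1))"
        using R1[of p "n+1"] p True by (simp add: K_def c_def)
      have b: "hD_det n = c * hD_det (K-1)"
        using R2[of p n] p True by (simp add: K_def c_def)
      have IH: "hd_det (K-1) * hd_det K = (-1)^(K-1) * var 0 * (hD_det (K-1))^2"
        using less.IH[of "K-1"] True K1 by simp
      have s: "((-1)^K :: ipoly) = - ((-1)^(K-1))" using sign_flip[of K "K-1" K] K1 by simp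
      have "hd_det n * hd_det (n+1) = - (c^2 * (hd_det (K-1) * hd_det K))"
        unfolding a using True by (simp add: algebra_simps)
      also have "\<dots> = (-1)^n * var 0 * (hD_det n)^2"
        unfolding b unfolding IH s True by (simp add: algebra_simps power2_eq_square)
      finally show ?thesis .
    next
      case False
      define e where "e = n - K"
      define q where "q = 2*K-1-n"
      have pK: "2^p < n" "n \<le> 2*2^p" "2^p < n+1" "n+1 \<le> 2*2^p" "2^p \<le> n" "n < 2*2^p"
        using p False unfolding K_def by auto
      have n: "n + q = 2*K-1" "q < n" "2*K - n = q + 1" "2*K - (n+1) = q" "n + 1 - K = e + 1"
        using p False unfolding K_def e_def q_def by auto
      have a: "hd_det n = (-1)^e * c^(2*e) * hd_det (q+1)"
        using R1[OF pK(1,2)] unfolding K_def[symmetric] c_def[symmetric] e_def[symmetric] n(3) .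
      have b: "hd_det (n+1) = (-1)^(e+1) * c^(2*(e+1)) * hd_det q"
        using R1[OF pK(3,4)] unfolding K_def[symmetric] c_def[symmetric] n(4) n(5) .
      have d: "hD_det n = (-1)^e * c^(2*e+1) * hD_det q"
        using R2[OF pK(5,6)] unfolding K_def[symmetric] c_def[symmetric] e_def[symmetric] q_def[symmetric] .
      have IH: "hd_det q * hd_det (q+1) = (-1)^q * var 0 * (hD_det q)^2"
        using less.IH[OF n(2)] .
      have s: "((-1)^n :: ipoly) = - ((-1)^q)" using sign_flip[OF n(1) K1] .
      have s1: "((-1)^e :: ipoly) * (-1)^(e+1) = -1"
      proof -
        have "((-1)^e :: ipoly) * (-1)^e = 1" by (simp add: power_add[symmetric] mult_2[symmetric] power_mult)
        then show ?thesis by simp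
      qed
      have s2: "((-1)^e :: ipoly) * (-1)^e = 1" by (simp add: power_add[symmetric] mult_2[symmetric] power_mult)
      have c1: "c^(2*e) * c^(2*(e+1)) = c^(2*e+1) * c^(2*e+1)" by (simp add: power_add[symmetric])
      have "hd_det n * hd_det (n+1) = ((-1)^e * (-1)^(e+1)) * (c^(2*e) * c^(2*(e+1))) * (hd_det q * hd_det (q+1))"
        unfolding a b by (simp only: ac_simps)
      also have "\<dots> = - ((c^(2*e+1) * c^(2*e+1)) * ((-1)^q * var 0 * (hD_det q)^2))"
        unfolding s1 c1 IH by simp
      also have "\<dots> = (-1)^n * var 0 * (hD_det n)^2"
      proof -
        have sq: "((-1)^e * c^(2*e+1) * hD_det q)^2 = ((-1)^e * (-1)^e) * (c^(2*e+1) * c^(2*e+1)) * (hD_det q)^2"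
          by (rule hx1)
        show ?thesis unfolding d s sq s2 by (rule hx2)
      qed
      finally show ?thesis .
    qed
  qed
qed

theorem lemma5p8:
  fixes n :: nat
  shows "to_fract (hd_det n * hd_det (n + 1)) / (to_fract (hD_det n))\<^sup>2
           = to_fract ((-1) ^ n * var 0)"
proof -
  have nz: "to_fract (hD_det n) \<noteq> 0" using hD_nz by simp
  have eq: "to_fract (hd_det n * hd_det (n + 1)) = to_fract ((-1) ^ n * var 0) * (to_fract (hD_det n))\<^sup>2"
    unfolding main_id power2_eq_square by (simp only: to_fract_mult)
  show ?thesis unfolding eq using nz by simp
qed

end
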